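(* Let $G$ be an abelian Polish group, let $P\subseteq G$ be a perfect set and let $C\subseteq G$ be a comeager set. Then there exists $g\in G$ such that $|C\cap (g+P)|=\mathfrak{c}$.
   Context: $\mathfrak c$ denotes the cardinality of the continuum. *)

theory Defs
  imports "HOL-Analysis.Analysis" "HOL-Library.Equipollence"
begin

definition perfect_set :: "'a::topological_space set \<Rightarrow> bool" where
  "perfect_set P \<longleftrightarrow> closed P \<and> (\<forall>x\<in>P. x islimpt P)"

definition nowhere_dense :: "'a::topological_space set \<Rightarrow> bool" where
  "nowhere_dense S \<longleftrightarrow> interior (closure S) = {}"

definition meager :: "'a::topological_space set \<Rightarrow> bool" where
  "meager S \<longleftrightarrow> (\<exists>F. countable F \<and> (\<forall>N\<in>F. nowhere_dense N) \<and> S \<subseteq> \<Union>F)"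

definition comeager :: "'a::topological_space set \<Rightarrow> bool" where
  "comeager C \<longleftrightarrow> meager (- C)"

end

theory Submission
  imports Defs
begin

lemma univ_lepoll_real:
  "(UNIV :: 'a::{second_countable_topology, t1_space} set) \<lesssim> (UNIV :: real set)"
proof -
  obtain B :: "'a set set" where B: "countable B" "topological_basis B"
    using ex_countable_basis by blast
  have "B \<noteq> {}"
  proof
    assume "B = {}"
    then show False using topological_basisE[OF B(2), of UNIV undefined] by auto
  qed
  define e where "e = from_nat_into B"
  define h where "h x = {n. x \<in> e n}" for x
  have "inj h"
  proof (rule injI)
    fix x y assume hxy: "h x = h y"
    show "x = y"
    proof (rule ccontr)
      assume "x \<noteq> y"
      then obtain U where "open U" "x \<in> U" "y \<notin> U"
        by (meson t1_space)
      then obtain b where b: "b \<in> B" "x \<in> b" "b \<subseteq> U"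
        by (meson B(2) topological_basisE)
      then obtain n where "e n = b"
        using from_nat_into_surj[OF B(1)] e_def by metis
      then have "n \<in> h x" "n \<notin> h y" using b \<open>y \<notin> U\<close> h_def by auto
      then show False using hxy by simp
    qed
  qed
  then have "(UNIV :: 'a set) \<lesssim> (UNIV :: nat set set)"
    unfolding lepoll_def by blast
  also have "\<dots> \<approx> (UNIV :: real set)" by (rule nat_sets_eqpoll_reals)
  finally show ?thesis .
qed

lemma countable_dense_subset:
  fixes P :: "'a::second_countable_topology set"
  shows "\<exists>D. countable D \<and> D \<subseteq> P \<and> (\<forall>W. open W \<longrightarrow> W \<inter> P \<noteq> {} \<longrightarrow> W \<inter> D \<noteq> {})"
proof -
  obtain B :: "'a set set" where B: "countable B" "topological_basis B"
    using ex_countable_basis by blast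
  define D where "D = (\<lambda>b. SOME x. x \<in> b \<inter> P) ` {b\<in>B. b \<inter> P \<noteq> {}}"
  have "countable D" unfolding D_def using B(1) by simp
  moreover have "D \<subseteq> P" unfolding D_def
    by (auto intro: someI2_ex)
  moreover have "W \<inter> D \<noteq> {}" if W: "open W" "W \<inter> P \<noteq> {}" for W
  proof -
    obtain x where x: "x \<in> W" "x \<in> P" using W by blast
    then obtain b where b: "b \<in> B" "x \<in> b" "b \<subseteq> W"
      by (meson B(2) topological_basisE W(1))
    define d where "d = (SOME x. x \<in> b \<inter> P)"
    have "d \<in> b \<inter> P" unfolding d_def using b x by (metis IntI someI_ex)
    moreover have "d \<in> D" unfolding D_def d_def using b x by blast
    ultimately show ?thesis using b by blast
  qed
  ultimately show ?thesis by blast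
qed

theorem lemma3p4:
  fixes P C :: "'a :: {ab_group_add, topological_group_add, polish_space} set"
  assumes "perfect_set P" and "P \<noteq> {}"
    and "comeager C"
  shows "\<exists>g. C \<inter> ((\<lambda>p. g + p) ` P) \<approx> (UNIV :: real set)"
proof -
  have Pcl: "closed P" and Plim: "\<And>x. x \<in> P \<Longrightarrow> x islimpt P"
    using assms(1) unfolding perfect_set_def by auto
  obtain F where F: "countable F" "\<And>N. N \<in> F \<Longrightarrow> interior (closure N) = {}" "- C \<subseteq> \<Union>F"
    using assms(3) unfolding comeager_def meager_def nowhere_dense_def by blast
  obtain D where D: "countable D" "D \<subseteq> P" "\<And>W. open W \<Longrightarrow> W \<inter> P \<noteq> {} \<Longrightarrow> W \<inter> D \<noteq> {}"
    using countable_dense_subset[of P] by blast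
  have meet: "W \<inter> - closure N \<noteq> {}" if "N \<in> F" "open W" "W \<noteq> {}" for N W
  proof
    assume "W \<inter> - closure N = {}"
    then have "W \<subseteq> closure N" by blast
    then have "W \<subseteq> interior (closure N)" using that(2) by (meson interior_maximal)
    then show False using F(2)[OF that(1)] that(3) by blast
  qed
  define T where "T dN = {g. g + fst dN \<notin> closure (snd dN)}" for dN :: "'a \<times> 'a set"
  define \<G> where "\<G> = T ` (D \<times> F)"
  have "closure (\<Inter>\<G>) = UNIV"
  proof -
    have "euclidean closure_of \<Inter>\<G> = topspace euclidean"
    proof (rule Baire_category)
      show "completely_metrizable_space (euclidean :: 'a topology) \<or> locally_compact_space (euclidean :: 'a topology) \<and> regular_space (euclidean :: 'a topology)"
        by (rule disjI1, rule completely_metrizable_space_euclidean)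
      show "countable \<G>" unfolding \<G>_def using D(1) F(1) by simp
      fix S assume "S \<in> \<G>"
      then obtain d N where dN: "d \<in> D" "N \<in> F" "S = {g. g + d \<notin> closure N}"
        unfolding \<G>_def T_def by auto
      have opS: "open S"
      proof -
        have "S = (\<lambda>g. g + d) -` (- closure N)" using dN by auto
        moreover have "open ((\<lambda>g. g + d) -` (- closure N))"
          by (intro continuous_open_vimage) (auto intro: continuous_intros)
        ultimately show ?thesis by simp
      qed
      have "closure S = UNIV"
      proof -
        have "x \<in> closure S" for x
          unfolding closure_iff_nhds_not_empty
        proof (intro allI impI)
          fix A V assume "V \<subseteq> A" "open V" "x \<in> V"
          have "open ((\<lambda>g. g - d) -` V)"
            using \<open>open V\<close> by (intro continuous_open_vimage) (auto intro: continuous_intros)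
          moreover have "x + d \<in> (\<lambda>g. g - d) -` V" using \<open>x \<in> V\<close> by simp
          ultimately have "((\<lambda>g. g - d) -` V) \<inter> - closure N \<noteq> {}"
            using meet[OF dN(2)] by blast
          then obtain y where y: "y - d \<in> V" "y \<notin> closure N"
            by blast
          have "y - d \<in> S" using y dN(3) by simp
          then show "S \<inter> A \<noteq> {}" using y \<open>V \<subseteq> A\<close> by blast
        qed
        then show ?thesis by blast
      qed
      then show "openin euclidean S \<and> euclidean closure_of S = topspace euclidean"
        using opS by simp
    qed
    then show ?thesis by simp
  qed
  then have "\<Inter>\<G> \<noteq> {}" by (metis closure_empty UNIV_not_empty)
  then obtain g where g: "g \<in> \<Inter>\<G>" by blast
  then have gD: "\<And>d N. d \<in> D \<Longrightarrow> N \<in> F \<Longrightarrow> g + d \<notin> closure N"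
    unfolding \<G>_def T_def by auto
  define S where "S = {p \<in> P. \<forall>N\<in>F. g + p \<notin> closure N}"
  have DS: "D \<subseteq> S" using D(2) gD unfolding S_def by auto
  have SP: "S \<subseteq> P" unfolding S_def by auto
  have SC: "(\<lambda>p. g + p) ` S \<subseteq> C \<inter> ((\<lambda>p. g + p) ` P)"
  proof
    fix y assume "y \<in> (\<lambda>p. g + p) ` S"
    then obtain p where p: "p \<in> S" "y = g + p" by blast
    have "y \<in> C"
    proof (rule ccontr)
      assume "y \<notin> C"
      then obtain N where "N \<in> F" "y \<in> N" using F(3) by blast
      moreover have "g + p \<notin> closure N" using p(1) \<open>N \<in> F\<close> unfolding S_def by blast
      ultimately show False using p(2) closure_subset by blast
    qed
    then show "y \<in> C \<inter> ((\<lambda>p. g + p) ` P)" using p SP by blast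
  qed
  have "S \<noteq> {}"
  proof -
    have "UNIV \<inter> D \<noteq> {}" by (rule D(3)[OF open_UNIV]) (simp add: assms(2))
    then show ?thesis using DS by blast
  qed
  have cmP: "completely_metrizable_space (top_of_set P)"
  proof -
    have "closedin euclidean P" using Pcl closed_closedin by blast
    then show ?thesis
      by (rule completely_metrizable_space_closedin[OF completely_metrizable_space_euclidean])
  qed
  have "gdelta_in (top_of_set P) S"
    unfolding gdelta_in_alt
  proof
    show "S \<subseteq> topspace (top_of_set P)" using SP by simp
    define \<U> where "\<U> = insert P ((\<lambda>N. P \<inter> ((\<lambda>p. g + p) -` (- closure N))) ` F)"
    have "countable \<U>" unfolding \<U>_def using F(1) by simp
    moreover have "\<U> \<subseteq> Collect (openin (top_of_set P))"
    proof -
      have "openin (top_of_set P) (P \<inter> ((\<lambda>p. g + p) -` (- closure N)))" for N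
        by (intro openin_open_Int continuous_open_vimage) (auto intro: continuous_intros)
      then show ?thesis unfolding \<U>_def by auto
    qed
    moreover have "\<Inter>\<U> = S" unfolding \<U>_def S_def by auto
    ultimately show "(countable intersection_of openin (top_of_set P)) S"
      unfolding intersection_of_def by blast
  qed
  then have cmS: "completely_metrizable_space (top_of_set S)"
  proof -
    have "subtopology (top_of_set P) S = top_of_set S"
      using SP by (simp add: subtopology_subtopology Int_absorb1)
    then show ?thesis
      using completely_metrizable_space_gdelta_in[OF cmP \<open>gdelta_in (top_of_set P) S\<close>] by simp
  qed
  have der: "top_of_set S derived_set_of S = S"
  proof
    show "top_of_set S derived_set_of S \<subseteq> S"
      using derived_set_of_subset_topspace by fastforce
    show "S \<subseteq> top_of_set S derived_set_of S"
    proof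
      fix x assume xS: "x \<in> S"
      show "x \<in> top_of_set S derived_set_of S"
        unfolding in_derived_set_of
      proof (intro conjI allI impI)
        show "x \<in> topspace (top_of_set S)" using xS by simp
        fix U assume "x \<in> U \<and> openin (top_of_set S) U"
        then obtain W where W: "open W" "U = S \<inter> W" "x \<in> W"
          by (auto simp: openin_open)
        have "x islimpt P" using Plim xS SP by blast
        then obtain y where y: "y \<in> P" "y \<in> W" "y \<noteq> x"
          using W by (meson islimptE)
        have "open (W - {x})" using W(1) by (simp add: open_delete)
        moreover have "(W - {x}) \<inter> P \<noteq> {}" using y by blast
        ultimately obtain d where "d \<in> W - {x}" "d \<in> D" using D(3) by blast
        then show "\<exists>y\<noteq>x. y \<in> S \<and> y \<in> U" using DS W(2) by blast
      qed
    qed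
  qed
  have "(UNIV :: real set) \<lesssim> S"
    by (rule lepoll_perfect_set[OF disjI1[OF cmS] der \<open>S \<noteq> {}\<close>])
  also have "S \<lesssim> C \<inter> ((\<lambda>p. g + p) ` P)"
  proof -
    have "inj_on (\<lambda>p. g + p) S" by (simp add: inj_on_def)
    then show ?thesis unfolding lepoll_def using SC by blast
  qed
  finally have lo: "(UNIV :: real set) \<lesssim> C \<inter> ((\<lambda>p. g + p) ` P)" .
  have "C \<inter> ((\<lambda>p. g + p) ` P) \<lesssim> (UNIV :: 'a set)" by (rule subset_imp_lepoll) simp
  also have "\<dots> \<lesssim> (UNIV :: real set)" by (rule univ_lepoll_real)
  finally have up: "C \<inter> ((\<lambda>p. g + p) ` P) \<lesssim> (UNIV :: real set)" .
  show ?thesis by (rule exI, rule lepoll_antisym[OF up lo])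
qed

end
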